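(* Let $C$ be a constant and $h>0$. On the grid $x_j=x_0+jh$, $j\in\mathbb Z$, consider the linear semidiscrete wave system $$\dot v_j=w_j,\qquad \dot w_j=\frac{v_{j+1}-2v_j+v_{j-1}}{h^2}-Cv_j,\qquad j\in\mathbb Z.$$ Then for every $k=0,1,2,\dots$ the functional $$R_k=\sum_j w_j\,\big(D_0 (D_-D_+)^k v\big)_j\,h=-\sum_j v_j\,\big(D_0 (D_-D_+)^k w\big)_j\,h$$ is conserved along solutions. Moreover, if $\alpha(t,x)$ satisfies $$\alpha_{tt}(t,x)=\frac{\alpha(t,x+h)-2\alpha(t,x)+\alpha(t,x-h)}{h^2}-C\alpha(t,x),$$ then the functional $T=\sum_j\big(\alpha(t,x_j)w_j-\alpha_t(t,x_j)v_j\big)h$ is conserved along solutions.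
   Context: $S_\pm u_j=u_{j\pm1}$, $D_+=(S_+-1)/h$, $D_-=(1-S_-)/h$, $D_0=(S_+-S_-)/(2h)$. Solutions are assumed to decay sufficiently fast as $|j|\to\infty$ for all sums to make sense. *)

theory Defs
  imports "HOL-Analysis.Analysis"
begin

definition Dp :: "real \<Rightarrow> (int \<Rightarrow> real) \<Rightarrow> (int \<Rightarrow> real)" where
  "Dp h u = (\<lambda>j. (u (j + 1) - u j) / h)"

definition Dm :: "real \<Rightarrow> (int \<Rightarrow> real) \<Rightarrow> (int \<Rightarrow> real)" where
  "Dm h u = (\<lambda>j. (u j - u (j - 1)) / h)"

definition D0 :: "real \<Rightarrow> (int \<Rightarrow> real) \<Rightarrow> (int \<Rightarrow> real)" where
  "D0 h u = (\<lambda>j. (u (j + 1) - u (j - 1)) / (2 * h))"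

definition D0DDk :: "real \<Rightarrow> nat \<Rightarrow> (int \<Rightarrow> real) \<Rightarrow> (int \<Rightarrow> real)" where
  "D0DDk h k u = D0 h (((Dm h \<circ> Dp h) ^^ k) u)"

definition is_sd_wave_solution ::
    "real \<Rightarrow> real \<Rightarrow> (real \<Rightarrow> int \<Rightarrow> real) \<Rightarrow> (real \<Rightarrow> int \<Rightarrow> real) \<Rightarrow> bool" where
  "is_sd_wave_solution h C v w \<longleftrightarrow>
     (\<forall>t j. ((\<lambda>s. v s j) has_real_derivative w t j) (at t)) \<and>
     (\<forall>t j. ((\<lambda>s. w s j) has_real_derivative
              ((v t (j + 1) - 2 * v t j + v t (j - 1)) / h\<^sup>2 - C * v t j)) (at t))"

definition sd_decay :: "(real \<Rightarrow> int \<Rightarrow> real) \<Rightarrow> (real \<Rightarrow> int \<Rightarrow> real) \<Rightarrow> bool" where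
  "sd_decay v w \<longleftrightarrow>
     (\<forall>a b. \<exists>B. B summable_on (UNIV :: int set) \<and>
        (\<forall>t\<in>{a..b}. \<forall>j. \<bar>v t j\<bar> \<le> B j \<and> \<bar>w t j\<bar> \<le> B j))"

end

theory Submission
  imports Defs "HOL-Library.Nat_Bijection"
begin


lemma sm_diff: fixes f g :: "'a \<Rightarrow> real"
  assumes "f summable_on A" "g summable_on A" shows "(\<lambda>x. f x - g x) summable_on A"
  using summable_on_add[OF assms(1) summable_on_uminus[THEN iffD2, OF assms(2)]] by simp

lemma is_diff: fixes f g :: "'a \<Rightarrow> real"
  assumes "f summable_on A" "g summable_on A" shows "(\<Sum>\<^sub>\<infinity>x\<in>A. f x - g x) = infsum f A - infsum g A"
  using infsum_add[OF assms(1) summable_on_uminus[THEN iffD2, OF assms(2)]] infsum_uminus[of g A] by simp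

lemma sm_div: fixes f :: "'a \<Rightarrow> real"
  assumes "f summable_on A" shows "(\<lambda>x. f x / c) summable_on A"
  using summable_on_cmult_left[OF assms, of "inverse c"] by (simp add: divide_inverse)

lemma is_div: fixes f :: "'a \<Rightarrow> real"
  shows "(\<Sum>\<^sub>\<infinity>x\<in>A. f x / c) = infsum f A / c"
  using infsum_cmult_left'[of f "inverse c" A] by (simp add: divide_inverse)

lemma bij_shift: "bij_betw (\<lambda>j::int. j + c) UNIV UNIV"
  by (rule bij_betwI[where g="\<lambda>j. j - c"]) auto

lemma sm_shift: fixes u :: "int \<Rightarrow> real"
  assumes "u summable_on UNIV" shows "(\<lambda>j. u (j + c)) summable_on UNIV"
  using summable_on_reindex_bij_betw[OF bij_shift, of u c] assms by simp

lemma is_shift: fixes u :: "int \<Rightarrow> real"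
  shows "(\<Sum>\<^sub>\<infinity>j. u (j + c)) = (\<Sum>\<^sub>\<infinity>j. u j)"
  using infsum_reindex_bij_betw[OF bij_shift, of u c] by simp

lemma sm_bound: fixes u :: "int \<Rightarrow> real"
  assumes "u summable_on UNIV" shows "\<bar>u j\<bar> \<le> (\<Sum>\<^sub>\<infinity>i. \<bar>u i\<bar>)"
proof -
  have a: "(\<lambda>i. \<bar>u i\<bar>) summable_on UNIV"
    using assms summable_on_iff_abs_summable_on_real by auto
  have "(\<Sum>\<^sub>\<infinity>i\<in>{j}. \<bar>u i\<bar>) \<le> (\<Sum>\<^sub>\<infinity>i. \<bar>u i\<bar>)"
    by (rule infsum_mono2[OF summable_on_subset[OF a] a]) auto
  then show ?thesis by simp
qed

lemma sm_cmp: fixes u M :: "int \<Rightarrow> real"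
  assumes "M summable_on UNIV" "\<And>j. \<bar>u j\<bar> \<le> M j" shows "u summable_on UNIV"
proof -
  have "(\<lambda>j. \<bar>u j\<bar>) summable_on UNIV"
    by (rule summable_on_comparison_test[OF assms(1)]) (use assms(2) in auto)
  then show ?thesis using summable_on_iff_abs_summable_on_real by auto
qed

lemma sm_abs: fixes u :: "int \<Rightarrow> real"
  assumes "u summable_on UNIV" shows "(\<lambda>j. \<bar>u j\<bar>) summable_on UNIV"
  using assms summable_on_iff_abs_summable_on_real by auto

lemma sm_mult_bdd: fixes u z :: "int \<Rightarrow> real"
  assumes "u summable_on UNIV" "\<And>j. \<bar>z j\<bar> \<le> K" shows "(\<lambda>j. z j * u j) summable_on UNIV"
proof (rule sm_cmp[OF summable_on_cmult_right[OF sm_abs[OF assms(1)], of K]])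
  fix j
  have "K \<ge> 0" using assms(2)[of 0] by linarith
  show "\<bar>z j * u j\<bar> \<le> K * \<bar>u j\<bar>"
    using assms(2)[of j] \<open>K \<ge> 0\<close> by (auto simp: abs_mult intro!: mult_right_mono)
qed

lemma sm_mult: fixes u z :: "int \<Rightarrow> real"
  assumes "u summable_on UNIV" "z summable_on UNIV" shows "(\<lambda>j. z j * u j) summable_on UNIV"
  using sm_mult_bdd[OF assms(1) sm_bound[OF assms(2)]] .

lemma infsum_deriv:
  fixes f f' :: "int \<Rightarrow> real \<Rightarrow> real"
  assumes d: "\<And>j t. ((\<lambda>s. f j s) has_real_derivative f' j t) (at t)"
    and sf: "\<And>t. (\<lambda>j. f j t) summable_on UNIV"
    and bd: "\<And>a b. \<exists>M. M summable_on UNIV \<and> (\<forall>t\<in>{a..b}. \<forall>j. \<bar>f' j t\<bar> \<le> M j)"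
  shows "((\<lambda>s. \<Sum>\<^sub>\<infinity>j. f j s) has_real_derivative (\<Sum>\<^sub>\<infinity>j. f' j t)) (at t)"
proof -
  define g where "g n s = f (int_decode n) s" for n s
  define g' where "g' n s = f' (int_decode n) s" for n s
  have bij: "bij_betw int_decode UNIV UNIV" using bij_int_decode by simp
  have e1: "(\<Sum>\<^sub>\<infinity>j. f j s) = (\<Sum>n. g n s)" for s
  proof -
    have "(\<lambda>n. g n s) summable_on UNIV"
      unfolding g_def using summable_on_reindex_bij_betw[OF bij, of "\<lambda>j. f j s"] sf by simp
    then have "(\<lambda>n. g n s) sums (\<Sum>\<^sub>\<infinity>n. g n s)"
      by (intro has_sum_imp_sums has_sum_infsum)
    moreover have "(\<Sum>\<^sub>\<infinity>n. g n s) = (\<Sum>\<^sub>\<infinity>j. f j s)"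
      unfolding g_def using infsum_reindex_bij_betw[OF bij, of "\<lambda>j. f j s"] by simp
    ultimately show ?thesis by (simp add: sums_iff)
  qed
  obtain M where M: "M summable_on UNIV" "\<forall>x\<in>{t-1..t+1}. \<forall>j. \<bar>f' j x\<bar> \<le> M j"
    using bd by blast
  have Ms: "(\<lambda>n. M (int_decode n)) summable_on UNIV"
    using summable_on_reindex_bij_betw[OF bij, of M] M(1) by simp
  have e2: "(\<Sum>\<^sub>\<infinity>j. f' j s) = (\<Sum>n. g' n s)" if "s \<in> {t-1..t+1}" for s
  proof -
    have "(\<lambda>j. f' j s) summable_on UNIV" by (rule sm_cmp[OF M(1)]) (use M(2) that in blast)
    then have "(\<lambda>n. g' n s) summable_on UNIV"
      unfolding g'_def using summable_on_reindex_bij_betw[OF bij, of "\<lambda>j. f' j s"] by simp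
    then have "(\<lambda>n. g' n s) sums (\<Sum>\<^sub>\<infinity>n. g' n s)"
      by (intro has_sum_imp_sums has_sum_infsum)
    moreover have "(\<Sum>\<^sub>\<infinity>n. g' n s) = (\<Sum>\<^sub>\<infinity>j. f' j s)"
      unfolding g'_def using infsum_reindex_bij_betw[OF bij, of "\<lambda>j. f' j s"] by simp
    ultimately show ?thesis by (simp add: sums_iff)
  qed
  have S: "ball t 1 \<subseteq> {t-1..t+1}" by (auto simp: dist_real_def)
  have "((\<lambda>x. \<Sum>n. g n x) has_field_derivative (\<Sum>n. g' n t)) (at t)"
  proof (rule has_field_derivative_series'(2)[where S="ball t 1" and x0=t])
    show "convex (ball t (1::real))" by simp
    show "(g n has_field_derivative g' n x) (at x within ball t 1)" for n x
      unfolding g_def g'_def using d by (auto intro: has_field_derivative_at_within)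
    show "uniformly_convergent_on (ball t 1) (\<lambda>n x. \<Sum>i<n. g' i x)"
    proof (rule Weierstrass_m_test'[where M="\<lambda>n. M (int_decode n)"])
      show "norm (g' n x) \<le> M (int_decode n)" if "x \<in> ball t 1" for n x
        using M(2) S that unfolding g'_def by auto
      show "summable (\<lambda>n. M (int_decode n))" using Ms by (rule summable_on_imp_summable)
    qed
    show "t \<in> ball t 1" by simp
    show "t \<in> interior (ball t 1)" by simp
    show "summable (\<lambda>n. g n t)"
      using summable_on_reindex_bij_betw[OF bij, of "\<lambda>j. f j t"] sf unfolding g_def
      by (auto intro: summable_on_imp_summable)
  qed
  then show ?thesis using e1 e2[of t] by simp
qed



abbreviation LL :: "real \<Rightarrow> (int \<Rightarrow> real) \<Rightarrow> (int \<Rightarrow> real)" where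
  "LL h \<equiv> Dm h \<circ> Dp h"

lemma sm_Dp: "u summable_on UNIV \<Longrightarrow> Dp h u summable_on UNIV"
  unfolding Dp_def by (intro sm_div sm_diff sm_shift)
lemma sm_Dm: "u summable_on UNIV \<Longrightarrow> Dm h u summable_on UNIV"
  unfolding Dm_def using sm_shift[of u "-1"] by (intro sm_div sm_diff) auto
lemma sm_D0: "u summable_on UNIV \<Longrightarrow> D0 h u summable_on UNIV"
  unfolding D0_def using sm_shift[of u "-1"] sm_shift[of u 1] by (intro sm_div sm_diff) auto
lemma sm_Lk: "u summable_on UNIV \<Longrightarrow> (LL h ^^ k) u summable_on UNIV"
  by (induction k) (auto intro: sm_Dm sm_Dp)

lemma sbp_p:
  assumes u: "u summable_on UNIV" and z: "z summable_on UNIV"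
  shows "(\<Sum>\<^sub>\<infinity>j. z j * Dp h u j) = - (\<Sum>\<^sub>\<infinity>j. Dm h z j * u j)"
proof -
  have s1: "(\<lambda>j. z j * u (j+1)) summable_on UNIV" using sm_mult[OF sm_shift[OF u] z] .
  have s2: "(\<lambda>j. z j * u j) summable_on UNIV" using sm_mult[OF u z] .
  have s3: "(\<lambda>j. z (j-1) * u j) summable_on UNIV" using sm_mult[OF u sm_shift[OF z, of "-1"]] by simp
  have sh: "(\<Sum>\<^sub>\<infinity>j. z j * u (j+1)) = (\<Sum>\<^sub>\<infinity>j. z (j-1) * u j)"
    using is_shift[of "\<lambda>j. z (j-1) * u j" 1] by simp
  have "(\<Sum>\<^sub>\<infinity>j. z j * Dp h u j) = (\<Sum>\<^sub>\<infinity>j. (z j * u (j+1) - z j * u j) / h)"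
    unfolding Dp_def by (simp add: algebra_simps)
  also have "\<dots> = ((\<Sum>\<^sub>\<infinity>j. z j * u (j+1)) - (\<Sum>\<^sub>\<infinity>j. z j * u j)) / h"
    by (simp add: is_div is_diff[OF s1 s2])
  also have "\<dots> = ((\<Sum>\<^sub>\<infinity>j. z (j-1) * u j) - (\<Sum>\<^sub>\<infinity>j. z j * u j)) / h" by (simp add: sh)
  also have "\<dots> = - ((\<Sum>\<^sub>\<infinity>j. z j * u j) - (\<Sum>\<^sub>\<infinity>j. z (j-1) * u j)) / h" by argo
  also have "\<dots> = - (\<Sum>\<^sub>\<infinity>j. (z j * u j - z (j-1) * u j) / h)"
    by (simp only: is_div is_diff[OF s2 s3])
  also have "\<dots> = - (\<Sum>\<^sub>\<infinity>j. Dm h z j * u j)"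
    unfolding Dm_def by (simp add: algebra_simps)
  finally show ?thesis .
qed

lemma sbp_m:
  assumes u: "u summable_on UNIV" and z: "z summable_on UNIV"
  shows "(\<Sum>\<^sub>\<infinity>j. z j * Dm h u j) = - (\<Sum>\<^sub>\<infinity>j. Dp h z j * u j)"
  using sbp_p[OF z u, of h] by (simp add: mult.commute)

lemma sbp_L:
  assumes u: "u summable_on UNIV" and z: "z summable_on UNIV"
  shows "(\<Sum>\<^sub>\<infinity>j. z j * LL h u j) = (\<Sum>\<^sub>\<infinity>j. LL h z j * u j)"
  using sbp_m[OF sm_Dp[OF u] z, of h] sbp_p[OF u sm_Dp[OF z], of h] by simp

lemma sbp_Lk:
  assumes u: "u summable_on UNIV" and z: "z summable_on UNIV"
  shows "(\<Sum>\<^sub>\<infinity>j. z j * (LL h ^^ k) u j) = (\<Sum>\<^sub>\<infinity>j. (LL h ^^ k) z j * u j)"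
  using z
proof (induction k arbitrary: z)
  case 0 then show ?case by simp
next
  case (Suc k)
  have "(\<Sum>\<^sub>\<infinity>j. z j * (LL h ^^ Suc k) u j) = (\<Sum>\<^sub>\<infinity>j. z j * LL h ((LL h ^^ k) u) j)" by simp
  also have "\<dots> = (\<Sum>\<^sub>\<infinity>j. LL h z j * (LL h ^^ k) u j)"
    by (rule sbp_L[OF sm_Lk[OF u] Suc.prems])
  also have "\<dots> = (\<Sum>\<^sub>\<infinity>j. (LL h ^^ k) (LL h z) j * u j)"
    by (rule Suc.IH) (simp add: sm_Dm sm_Dp Suc.prems)
  also have "\<dots> = (\<Sum>\<^sub>\<infinity>j. (LL h ^^ Suc k) z j * u j)"
    by (simp only: funpow_Suc_right o_apply)
  finally show ?case .
qed

lemma sbp_0: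
  assumes u: "u summable_on UNIV" and z: "z summable_on UNIV"
  shows "(\<Sum>\<^sub>\<infinity>j. z j * D0 h u j) = - (\<Sum>\<^sub>\<infinity>j. D0 h z j * u j)"
proof -
  have s1: "(\<lambda>j. z j * u (j+1)) summable_on UNIV" using sm_mult[OF sm_shift[OF u] z] .
  have s2: "(\<lambda>j. z j * u (j-1)) summable_on UNIV" using sm_mult[OF sm_shift[OF u, of "-1"] z] by simp
  have s3: "(\<lambda>j. z (j-1) * u j) summable_on UNIV" using sm_mult[OF u sm_shift[OF z, of "-1"]] by simp
  have s4: "(\<lambda>j. z (j+1) * u j) summable_on UNIV" using sm_mult[OF u sm_shift[OF z, of "1"]] by simp
  have sh1: "(\<Sum>\<^sub>\<infinity>j. z j * u (j+1)) = (\<Sum>\<^sub>\<infinity>j. z (j-1) * u j)"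
    using is_shift[of "\<lambda>j. z (j-1) * u j" 1] by simp
  have sh2: "(\<Sum>\<^sub>\<infinity>j. z j * u (j-1)) = (\<Sum>\<^sub>\<infinity>j. z (j+1) * u j)"
    using is_shift[of "\<lambda>j. z (j+1) * u j" "-1"] by simp
  have "(\<Sum>\<^sub>\<infinity>j. z j * D0 h u j) = (\<Sum>\<^sub>\<infinity>j. (z j * u (j+1) - z j * u (j-1)) / (2*h))"
    unfolding D0_def by (simp add: algebra_simps)
  also have "\<dots> = ((\<Sum>\<^sub>\<infinity>j. z j * u (j+1)) - (\<Sum>\<^sub>\<infinity>j. z j * u (j-1))) / (2*h)"
    by (simp only: is_div is_diff[OF s1 s2])
  also have "\<dots> = - ((\<Sum>\<^sub>\<infinity>j. z (j+1) * u j) - (\<Sum>\<^sub>\<infinity>j. z (j-1) * u j)) / (2*h)" by (simp add: sh1 sh2)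
  also have "\<dots> = - (\<Sum>\<^sub>\<infinity>j. (z (j+1) * u j - z (j-1) * u j) / (2*h))"
    by (simp only: is_div is_diff[OF s4 s3])
  also have "\<dots> = - (\<Sum>\<^sub>\<infinity>j. D0 h z j * u j)"
    unfolding D0_def by (simp add: algebra_simps)
  finally show ?thesis .
qed

lemma D0_L: "D0 h (Dm h (Dp h u)) = Dm h (Dp h (D0 h u))"
  by (rule ext) (cases "h = 0", simp_all add: D0_def Dm_def Dp_def field_simps)

lemma D0_Lk: "D0 h ((LL h ^^ k) u) = (LL h ^^ k) (D0 h u)"
  by (induction k) (simp_all add: D0_L)

lemma antisym:
  assumes u: "u summable_on UNIV" and z: "z summable_on UNIV"
  shows "(\<Sum>\<^sub>\<infinity>j. z j * D0DDk h k u j) = - (\<Sum>\<^sub>\<infinity>j. u j * D0DDk h k z j)"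
proof -
  have "(\<Sum>\<^sub>\<infinity>j. z j * D0DDk h k u j) = - (\<Sum>\<^sub>\<infinity>j. D0 h z j * (LL h ^^ k) u j)"
    unfolding D0DDk_def by (rule sbp_0[OF sm_Lk[OF u] z])
  also have "\<dots> = - (\<Sum>\<^sub>\<infinity>j. (LL h ^^ k) (D0 h z) j * u j)"
    using sbp_Lk[OF u sm_D0[OF z]] by simp
  also have "\<dots> = - (\<Sum>\<^sub>\<infinity>j. u j * D0DDk h k z j)"
    unfolding D0DDk_def D0_Lk by (simp add: mult.commute)
  finally show ?thesis .
qed



lemma Dm_app: "Dm h u j = (u j - u (j - 1)) / h" by (simp add: Dm_def)
lemma Dp_app: "Dp h u j = (u (j + 1) - u j) / h" by (simp add: Dp_def)

lemma deriv_Lk: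
  assumes "\<And>j. ((\<lambda>s. u s j) has_real_derivative u' j) (at t)"
  shows "((\<lambda>s. (LL h ^^ k) (u s) j) has_real_derivative (LL h ^^ k) u' j) (at t)"
proof (induction k arbitrary: j)
  case 0 then show ?case using assms by simp
next
  case (Suc k)
  have eq: "(LL h ^^ Suc k) s j = (((LL h^^k) s (j+1) - (LL h^^k) s j)/h - ((LL h^^k) s j - (LL h^^k) s (j-1))/h)/h" for s
    by (simp add: Dm_app Dp_app)
  show ?case
    unfolding eq by (intro DERIV_cdivide DERIV_diff Suc.IH)
qed

lemma deriv_A:
  assumes "\<And>j. ((\<lambda>s. u s j) has_real_derivative u' j) (at t)"
  shows "((\<lambda>s. D0DDk h k (u s) j) has_real_derivative D0DDk h k u' j) (at t)"
  unfolding D0DDk_def D0_def by (intro DERIV_cdivide DERIV_diff deriv_Lk assms)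

lemma bd_Lk:
  assumes "h > 0" "\<And>i. \<bar>u i\<bar> \<le> c"
  shows "\<bar>(LL h ^^ k) u j\<bar> \<le> (4 / h^2)^k * c"
proof (induction k arbitrary: j)
  case 0 then show ?case using assms by simp
next
  case (Suc k)
  let ?c = "(4 / h^2)^k * c"
  have dp: "\<bar>Dp h ((LL h ^^ k) u) i\<bar> \<le> 2 * ?c / h" for i
  proof -
    have "\<bar>(LL h ^^ k) u (i+1) - (LL h ^^ k) u i\<bar> \<le> 2 * ?c"
      using Suc.IH[of "i+1"] Suc.IH[of i] by linarith
    then show ?thesis using assms(1) unfolding Dp_def by (simp add: divide_right_mono)
  qed
  have "\<bar>Dp h ((LL h ^^ k) u) j - Dp h ((LL h ^^ k) u) (j-1)\<bar> \<le> 2 * (2 * ?c / h)"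
    using dp[of j] dp[of "j-1"] by linarith
  then have "\<bar>Dp h ((LL h ^^ k) u) j - Dp h ((LL h ^^ k) u) (j-1)\<bar> / h \<le> 2 * (2 * ?c / h) / h"
    by (rule divide_right_mono) (use assms(1) in simp)
  then have "\<bar>Dm h (Dp h ((LL h ^^ k) u)) j\<bar> \<le> 2 * (2 * ?c / h) / h"
    using assms(1) by (simp only: Dm_app abs_divide)
  also have "2 * (2 * ?c / h) / h = (4 / h^2)^(Suc k) * c"
    using assms(1) by (simp add: field_simps power2_eq_square)
  finally show ?case by (metis comp_apply funpow.simps(2))
qed

lemma bd_A:
  assumes "h > 0" "\<And>i. \<bar>u i\<bar> \<le> c"
  shows "\<bar>D0DDk h k u j\<bar> \<le> (4 / h^2)^k / h * c"
proof -
  have "\<bar>(LL h ^^ k) u (j+1) - (LL h ^^ k) u (j-1)\<bar> \<le> 2 * ((4 / h^2)^k * c)"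
    using bd_Lk[where u=u and c=c and k=k and j="j+1", OF assms] bd_Lk[where u=u and c=c and k=k and j="j-1", OF assms] by linarith
  then have "\<bar>(LL h ^^ k) u (j+1) - (LL h ^^ k) u (j-1)\<bar> / (2*h) \<le> 2 * ((4 / h^2)^k * c) / (2*h)"
    by (rule divide_right_mono) (use assms(1) in simp)
  then have "\<bar>D0DDk h k u j\<bar> \<le> 2 * ((4 / h^2)^k * c) / (2*h)"
    using assms(1) unfolding D0DDk_def D0_def by (simp only: abs_divide)
  then show ?thesis using assms(1) by (simp add: field_simps)
qed

lemma LL_eq: "(u (j + 1) - 2 * u j + u (j - 1)) / h\<^sup>2 = LL h u j"
  by (cases "h = 0") (simp_all add: Dm_def Dp_def field_simps power2_eq_square)

lemma A_LL: "D0DDk h k (LL h u) = LL h (D0DDk h k u)"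
proof -
  have "(LL h ^^ k) (Dm h (Dp h u)) = Dm h (Dp h ((LL h ^^ k) u))"
    using funpow_swap1[of "LL h" k u] by simp
  then show ?thesis unfolding D0DDk_def by (simp add: D0_L)
qed



lemma sm_vw:
  assumes decay: "sd_decay v w"
  shows "v t summable_on UNIV" "w t summable_on UNIV"
proof -
  obtain B where B: "B summable_on UNIV" "\<forall>s\<in>{t..t}. \<forall>j. \<bar>v s j\<bar> \<le> B j \<and> \<bar>w s j\<bar> \<le> B j"
    using decay unfolding sd_decay_def by blast
  show "v t summable_on UNIV" by (rule sm_cmp[OF B(1)]) (use B(2) in auto)
  show "w t summable_on UNIV" by (rule sm_cmp[OF B(1)]) (use B(2) in auto)
qed

lemma part1:
  assumes decay: "sd_decay v w"
  shows "(\<Sum>\<^sub>\<infinity>j. w t j * D0DDk h k (v t) j * h) = - (\<Sum>\<^sub>\<infinity>j. v t j * D0DDk h k (w t) j * h)"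
  using antisym[OF sm_vw(1)[OF decay] sm_vw(2)[OF decay], where h=h and k=k]
  by (simp add: infsum_cmult_left')

lemma part2:
  assumes hpos: "h > 0" and sol: "is_sd_wave_solution h C v w" and decay: "sd_decay v w"
  shows "(\<Sum>\<^sub>\<infinity>j. w t j * D0DDk h k (v t) j * h) = (\<Sum>\<^sub>\<infinity>j. w s j * D0DDk h k (v s) j * h)"
proof -
  define A where "A = D0DDk h k"
  define f where "f j t = w t j * A (v t) j * h" for j t
  define f' where "f' j t = (((v t (j + 1) - 2 * v t j + v t (j - 1)) / h\<^sup>2 - C * v t j) * A (v t) j
       + A (w t) j * w t j) * h" for j t
  have dv: "\<And>t j. ((\<lambda>s. v s j) has_real_derivative w t j) (at t)"
   and dw: "\<And>t j. ((\<lambda>s. w s j) has_real_derivative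
              ((v t (j + 1) - 2 * v t j + v t (j - 1)) / h\<^sup>2 - C * v t j)) (at t)"
    using sol unfolding is_sd_wave_solution_def by auto
  have vs: "\<And>t. v t summable_on UNIV" and ws: "\<And>t. w t summable_on UNIV"
    using sm_vw[OF decay] by auto
  have d: "((\<lambda>s. f j s) has_real_derivative f' j t) (at t)" for j t
    unfolding f_def f'_def A_def
    by (intro DERIV_cmult_right DERIV_mult dw deriv_A dv)
  have sf: "(\<lambda>j. f j t) summable_on UNIV" for t
    unfolding f_def A_def
    by (intro summable_on_cmult_left sm_mult[OF _ ws] ) (simp add: D0DDk_def sm_D0 sm_Lk vs)
  have bd: "\<exists>M. M summable_on UNIV \<and> (\<forall>t\<in>{a..b}. \<forall>j. \<bar>f' j t\<bar> \<le> M j)" for a b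
  proof -
    obtain B where B: "B summable_on UNIV" "\<forall>t\<in>{a..b}. \<forall>j. \<bar>v t j\<bar> \<le> B j \<and> \<bar>w t j\<bar> \<le> B j"
      using decay unfolding sd_decay_def by blast
    define c where "c = (\<Sum>\<^sub>\<infinity>i. \<bar>B i\<bar>)"
    define K where "K = (4 / h^2)^k / h"
    have Bc: "B i \<le> c" for i using sm_bound[OF B(1), of i] unfolding c_def by linarith
    have K0: "K \<ge> 0" unfolding K_def using hpos by simp
    define M where "M j = ((B (j+1) + 2 * B j + B (j-1)) / h^2 + \<bar>C\<bar> * B j) * (K*c) * h + (K*c) * B j * h" for j
    have Ms: "M summable_on UNIV"
    proof -
      have b1: "(\<lambda>j. B (j+1)) summable_on UNIV" by (rule sm_shift[OF B(1)])
      have b2: "(\<lambda>j. B (j-1)) summable_on UNIV" using sm_shift[OF B(1), of "-1"] by simp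
      show ?thesis unfolding M_def
        by (intro summable_on_add summable_on_cmult_left summable_on_cmult_right sm_div b1 b2 B(1))
    qed
    have "\<bar>f' j t\<bar> \<le> M j" if t: "t \<in> {a..b}" for t j
    proof -
      have vB: "\<bar>v t i\<bar> \<le> B i" and wB: "\<bar>w t i\<bar> \<le> B i" for i using B(2) t by auto
      have vc: "\<bar>v t i\<bar> \<le> c" and wc: "\<bar>w t i\<bar> \<le> c" for i using vB wB Bc by (meson order_trans)+
      have Av: "\<bar>A (v t) j\<bar> \<le> K * c" unfolding A_def K_def by (rule bd_A[OF hpos vc])
      have Aw: "\<bar>A (w t) j\<bar> \<le> K * c" unfolding A_def K_def by (rule bd_A[OF hpos wc])
      have X: "\<bar>(v t (j + 1) - 2 * v t j + v t (j - 1)) / h\<^sup>2 - C * v t j\<bar>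
          \<le> (B (j+1) + 2 * B j + B (j-1)) / h^2 + \<bar>C\<bar> * B j"
      proof -
        have "\<bar>v t (j + 1) - 2 * v t j + v t (j - 1)\<bar> \<le> B (j+1) + 2 * B j + B (j-1)"
          using vB[of "j+1"] vB[of j] vB[of "j-1"] by linarith
        then have "\<bar>v t (j + 1) - 2 * v t j + v t (j - 1)\<bar> / h^2 \<le> (B (j+1) + 2 * B j + B (j-1)) / h^2"
          by (rule divide_right_mono) simp
        moreover have "\<bar>C * v t j\<bar> \<le> \<bar>C\<bar> * B j" unfolding abs_mult
          by (rule mult_left_mono[OF vB]) simp
        moreover have "\<bar>(v t (j + 1) - 2 * v t j + v t (j - 1)) / h\<^sup>2\<bar> = \<bar>v t (j + 1) - 2 * v t j + v t (j - 1)\<bar> / h^2"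
          by (simp add: abs_divide)
        moreover have "\<bar>(v t (j + 1) - 2 * v t j + v t (j - 1)) / h\<^sup>2 - C * v t j\<bar> \<le>
           \<bar>(v t (j + 1) - 2 * v t j + v t (j - 1)) / h\<^sup>2\<bar> + \<bar>C * v t j\<bar>" by (rule abs_triangle_ineq4)
        ultimately show ?thesis by linarith
      qed
      have "\<bar>f' j t\<bar> \<le> \<bar>(v t (j + 1) - 2 * v t j + v t (j - 1)) / h\<^sup>2 - C * v t j\<bar> * \<bar>A (v t) j\<bar> * h
           + \<bar>A (w t) j\<bar> * \<bar>w t j\<bar> * h"
        unfolding f'_def using hpos by (simp add: abs_mult distrib_right[symmetric]) (metis abs_mult abs_triangle_ineq)
      also have "\<dots> \<le> ((B (j+1) + 2 * B j + B (j-1)) / h^2 + \<bar>C\<bar> * B j) * (K*c) * h + (K*c) * B j * h"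
        using hpos order_trans[OF abs_ge_zero X] order_trans[OF abs_ge_zero Av]
        by (intro add_mono mult_right_mono mult_mono X Av Aw wB) auto
      finally show ?thesis unfolding M_def .
    qed
    then show ?thesis using Ms by blast
  qed
  have zero: "(\<Sum>\<^sub>\<infinity>j. f' j t) = 0" for t
  proof -
    have sA: "\<And>u. u summable_on UNIV \<Longrightarrow> A u summable_on UNIV"
      unfolding A_def D0DDk_def by (simp add: sm_D0 sm_Lk)
    have sL: "LL h (v t) summable_on UNIV" using vs by (simp add: sm_Dm sm_Dp)
    have e: "f' j t = h * (LL h (v t) j * A (v t) j) - (C * h) * (v t j * A (v t) j)
       + h * (w t j * A (w t) j)" for j
      unfolding f'_def LL_eq by (simp add: algebra_simps)
    have s1: "(\<lambda>j. LL h (v t) j * A (v t) j) summable_on UNIV" by (rule sm_mult[OF sA[OF vs] sL])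
    have s2: "(\<lambda>j. v t j * A (v t) j) summable_on UNIV" by (rule sm_mult[OF sA[OF vs] vs])
    have s3: "(\<lambda>j. w t j * A (w t) j) summable_on UNIV" by (rule sm_mult[OF sA[OF ws] ws])
    have z2: "(\<Sum>\<^sub>\<infinity>j. v t j * A (v t) j) = 0"
      using antisym[OF vs[of t] vs[of t], where h=h and k=k] unfolding A_def by linarith
    have z3: "(\<Sum>\<^sub>\<infinity>j. w t j * A (w t) j) = 0"
      using antisym[OF ws[of t] ws[of t], where h=h and k=k] unfolding A_def by linarith
    have z1: "(\<Sum>\<^sub>\<infinity>j. LL h (v t) j * A (v t) j) = 0"
    proof -
      have "(\<Sum>\<^sub>\<infinity>j. A (v t) j * LL h (v t) j) = (\<Sum>\<^sub>\<infinity>j. LL h (A (v t)) j * v t j)"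
        by (rule sbp_L[OF vs sA[OF vs]])
      also have "\<dots> = (\<Sum>\<^sub>\<infinity>j. v t j * A (LL h (v t)) j)"
        unfolding A_def A_LL by (simp add: mult.commute)
      also have "\<dots> = - (\<Sum>\<^sub>\<infinity>j. LL h (v t) j * A (v t) j)"
        unfolding A_def by (rule antisym[OF sL vs])
      finally show ?thesis by (simp add: mult.commute)
    qed
    have "(\<Sum>\<^sub>\<infinity>j. f' j t) = h * (\<Sum>\<^sub>\<infinity>j. LL h (v t) j * A (v t) j) - (C * h) * (\<Sum>\<^sub>\<infinity>j. v t j * A (v t) j)
       + h * (\<Sum>\<^sub>\<infinity>j. w t j * A (w t) j)"
    proof -
      have a1: "(\<lambda>j. h * (LL h (v t) j * A (v t) j)) summable_on UNIV" by (rule summable_on_cmult_right[OF s1])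
      have a2: "(\<lambda>j. (C * h) * (v t j * A (v t) j)) summable_on UNIV" by (rule summable_on_cmult_right[OF s2])
      have a3: "(\<lambda>j. h * (w t j * A (w t) j)) summable_on UNIV" by (rule summable_on_cmult_right[OF s3])
      have "(\<Sum>\<^sub>\<infinity>j. f' j t) = (\<Sum>\<^sub>\<infinity>j. (h * (LL h (v t) j * A (v t) j) - (C * h) * (v t j * A (v t) j))
         + h * (w t j * A (w t) j))" by (simp only: e)
      also have "\<dots> = (\<Sum>\<^sub>\<infinity>j. h * (LL h (v t) j * A (v t) j) - (C * h) * (v t j * A (v t) j))
         + (\<Sum>\<^sub>\<infinity>j. h * (w t j * A (w t) j))" by (rule infsum_add[OF sm_diff[OF a1 a2] a3])
      also have "\<dots> = (\<Sum>\<^sub>\<infinity>j. h * (LL h (v t) j * A (v t) j)) - (\<Sum>\<^sub>\<infinity>j. (C * h) * (v t j * A (v t) j))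
         + (\<Sum>\<^sub>\<infinity>j. h * (w t j * A (w t) j))" by (simp only: is_diff[OF a1 a2])
      finally show ?thesis by (simp only: infsum_cmult_right')
    qed
    then show ?thesis using z1 z2 z3 by simp
  qed
  have "((\<lambda>s. \<Sum>\<^sub>\<infinity>j. f j s) has_real_derivative 0) (at x)" for x
    using infsum_deriv[OF d sf bd, of x] zero[of x] by simp
  then have "(\<Sum>\<^sub>\<infinity>j. f j t) = (\<Sum>\<^sub>\<infinity>j. f j s)" by (intro DERIV_isconst_all) auto
  then show ?thesis unfolding f_def A_def .
qed



lemma part3:
  fixes alpha alpha_t :: "real \<Rightarrow> real \<Rightarrow> real"
  assumes hpos: "h > 0" and sol: "is_sd_wave_solution h C v w"
    and da: "\<forall>t x. ((\<lambda>s. alpha s x) has_real_derivative alpha_t t x) (at t)"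
    and dat: "\<forall>t x. ((\<lambda>s. alpha_t s x) has_real_derivative
                 ((alpha t (x + h) - 2 * alpha t x + alpha t (x - h)) / h\<^sup>2 - C * alpha t x)) (at t)"
    and GG: "\<forall>a b. \<exists>G. G summable_on (UNIV :: int set) \<and>
           (\<forall>t\<in>{a..b}. \<forall>j. \<forall>m\<in>{-1, 0, 1 :: int}.
              (\<bar>alpha t (x0 + real_of_int (j + m) * h)\<bar> + \<bar>alpha_t t (x0 + real_of_int (j + m) * h)\<bar>)
                * (\<bar>v t j\<bar> + \<bar>w t j\<bar>) \<le> G j)"
  shows "(\<Sum>\<^sub>\<infinity>j. (alpha t (x0 + real_of_int j * h) * w t j - alpha_t t (x0 + real_of_int j * h) * v t j) * h)
         = (\<Sum>\<^sub>\<infinity>j. (alpha s (x0 + real_of_int j * h) * w s j - alpha_t s (x0 + real_of_int j * h) * v s j) * h)"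
proof -
  define xj where "xj j = x0 + real_of_int j * h" for j :: int
  have xp: "xj j + h = xj (j+1)" and xm: "xj j - h = xj (j-1)" for j
    unfolding xj_def by (simp_all add: algebra_simps)
  have dv: "\<And>t j. ((\<lambda>s. v s j) has_real_derivative w t j) (at t)"
   and dw: "\<And>t j. ((\<lambda>s. w s j) has_real_derivative
              ((v t (j + 1) - 2 * v t j + v t (j - 1)) / h\<^sup>2 - C * v t j)) (at t)"
    using sol unfolding is_sd_wave_solution_def by auto
  have Gb: "\<exists>G. G summable_on UNIV \<and> (\<forall>t\<in>{a..b}. \<forall>j. \<forall>m\<in>{-1, 0, 1 :: int}.
      \<bar>alpha t (xj (j+m))\<bar> * \<bar>v t j\<bar> \<le> G j \<and> \<bar>alpha t (xj (j+m))\<bar> * \<bar>w t j\<bar> \<le> G j \<and>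
      \<bar>alpha_t t (xj (j+m))\<bar> * \<bar>v t j\<bar> \<le> G j \<and> \<bar>alpha_t t (xj (j+m))\<bar> * \<bar>w t j\<bar> \<le> G j)" for a b
  proof -
    obtain G where G: "G summable_on UNIV" "\<forall>t\<in>{a..b}. \<forall>j. \<forall>m\<in>{-1, 0, 1 :: int}.
              (\<bar>alpha t (xj (j + m))\<bar> + \<bar>alpha_t t (xj (j + m))\<bar>) * (\<bar>v t j\<bar> + \<bar>w t j\<bar>) \<le> G j"
      using GG unfolding xj_def by blast
    have "\<bar>alpha t (xj (j+m))\<bar> * \<bar>v t j\<bar> \<le> G j \<and> \<bar>alpha t (xj (j+m))\<bar> * \<bar>w t j\<bar> \<le> G j \<and>
      \<bar>alpha_t t (xj (j+m))\<bar> * \<bar>v t j\<bar> \<le> G j \<and> \<bar>alpha_t t (xj (j+m))\<bar> * \<bar>w t j\<bar> \<le> G j"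
      if "t \<in> {a..b}" "m \<in> {-1,0,1}" for t j m
    proof -
      define p where "p = \<bar>alpha t (xj (j+m))\<bar>"
      define q where "q = \<bar>alpha_t t (xj (j+m))\<bar>"
      define r where "r = \<bar>v t j\<bar>"
      define z where "z = \<bar>w t j\<bar>"
      have "(p + q) * (r + z) \<le> G j" using G(2) that unfolding p_def q_def r_def z_def by blast
      moreover have "(p + q) * (r + z) = p * r + p * z + q * r + q * z" by algebra
      moreover have "p * r \<ge> 0" "p * z \<ge> 0" "q * r \<ge> 0" "q * z \<ge> 0" unfolding p_def q_def r_def z_def by auto
      ultimately show ?thesis unfolding p_def [symmetric] q_def[symmetric] r_def[symmetric] z_def[symmetric]
        by linarith
    qed
    then show ?thesis using G(1) by blast
  qed
  define f where "f j s = (alpha s (xj j) * w s j - alpha_t s (xj j) * v s j) * h" for j s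
  define f' where "f' j t = ((alpha_t t (xj j) * w t j + ((v t (j + 1) - 2 * v t j + v t (j - 1)) / h\<^sup>2 - C * v t j) * alpha t (xj j))
     - (((alpha t (xj j + h) - 2 * alpha t (xj j) + alpha t (xj j - h)) / h\<^sup>2 - C * alpha t (xj j)) * v t j
        + w t j * alpha_t t (xj j))) * h" for j t
  define P where "P t j = alpha t (xj j) * v t (j+1) - alpha t (xj (j+1)) * v t j" for t j
  have f'_eq: "f' j t = (P t j - P t (j-1)) / h" for j t
    unfolding f'_def P_def xp xm using hpos by (simp add: field_simps power2_eq_square)
  have d: "((\<lambda>s. f j s) has_real_derivative f' j t) (at t)" for j t
    unfolding f_def f'_def using da dat
    by (intro DERIV_cmult_right DERIV_diff DERIV_mult dw dv) auto
  have sf: "(\<lambda>j. f j t) summable_on UNIV" for t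
  proof -
    obtain G where G: "G summable_on UNIV" "\<forall>j. \<forall>m\<in>{-1, 0, 1 :: int}.
      \<bar>alpha t (xj (j+m))\<bar> * \<bar>v t j\<bar> \<le> G j \<and> \<bar>alpha t (xj (j+m))\<bar> * \<bar>w t j\<bar> \<le> G j \<and>
      \<bar>alpha_t t (xj (j+m))\<bar> * \<bar>v t j\<bar> \<le> G j \<and> \<bar>alpha_t t (xj (j+m))\<bar> * \<bar>w t j\<bar> \<le> G j"
      using Gb[of t t] by auto
    show ?thesis
    proof (rule sm_cmp[OF summable_on_cmult_left[OF G(1), of "2*h"]])
      fix j
      have "\<bar>alpha t (xj j)\<bar> * \<bar>w t j\<bar> \<le> G j" "\<bar>alpha_t t (xj j)\<bar> * \<bar>v t j\<bar> \<le> G j"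
        using G(2)[THEN spec[of _ j], THEN bspec[of _ _ 0]] by auto
      then have "\<bar>alpha t (xj j) * w t j - alpha_t t (xj j) * v t j\<bar> \<le> 2 * G j"
        unfolding abs_mult[symmetric] by linarith
      then have "\<bar>alpha t (xj j) * w t j - alpha_t t (xj j) * v t j\<bar> * h \<le> 2 * G j * h"
        using hpos by (intro mult_right_mono) auto
      then show "\<bar>f j t\<bar> \<le> G j * (2 * h)" unfolding f_def using hpos by (simp add: abs_mult)
    qed
  qed
  have Pbd: "\<bar>P t j - P t (j-1)\<bar> \<le> G (j+1) + 2 * G j + G (j-1)"
    if gb: "\<And>j m. m \<in> {-1,0,1} \<Longrightarrow> \<bar>alpha t (xj (j+m))\<bar> * \<bar>v t j\<bar> \<le> G j" for G t j
  proof -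
    have 1: "\<bar>alpha t (xj j)\<bar> * \<bar>v t (j+1)\<bar> \<le> G (j+1)" using gb[of "-1" "j+1"] by simp
    have 2: "\<bar>alpha t (xj (j+1))\<bar> * \<bar>v t j\<bar> \<le> G j" using gb[of 1 j] by simp
    have 3: "\<bar>alpha t (xj (j-1))\<bar> * \<bar>v t j\<bar> \<le> G j" using gb[of "-1" j] by simp
    have 4: "\<bar>alpha t (xj j)\<bar> * \<bar>v t (j-1)\<bar> \<le> G (j-1)" using gb[of 1 "j-1"] by simp
    have "\<bar>P t j - P t (j-1)\<bar> \<le> \<bar>alpha t (xj j)\<bar> * \<bar>v t (j+1)\<bar> + \<bar>alpha t (xj (j+1))\<bar> * \<bar>v t j\<bar>
       + \<bar>alpha t (xj (j-1))\<bar> * \<bar>v t j\<bar> + \<bar>alpha t (xj j)\<bar> * \<bar>v t (j-1)\<bar>"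
      unfolding P_def abs_mult[symmetric] by simp
    then show ?thesis using 1 2 3 4 by linarith
  qed
  have bd: "\<exists>M. M summable_on UNIV \<and> (\<forall>t\<in>{a..b}. \<forall>j. \<bar>f' j t\<bar> \<le> M j)" for a b
  proof -
    obtain G where G: "G summable_on UNIV" "\<forall>t\<in>{a..b}. \<forall>j. \<forall>m\<in>{-1, 0, 1 :: int}.
      \<bar>alpha t (xj (j+m))\<bar> * \<bar>v t j\<bar> \<le> G j"
      using Gb[of a b] by meson
    define M where "M j = (G (j+1) + 2 * G j + G (j-1)) / h" for j
    have Ms: "M summable_on UNIV"
    proof -
      have b1: "(\<lambda>j. G (j+1)) summable_on UNIV" by (rule sm_shift[OF G(1)])
      have b2: "(\<lambda>j. G (j-1)) summable_on UNIV" using sm_shift[OF G(1), of "-1"] by simp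
      show ?thesis unfolding M_def
        by (intro summable_on_add summable_on_cmult_left summable_on_cmult_right sm_div b1 b2 G(1))
    qed
    have "\<bar>f' j t\<bar> \<le> M j" if t: "t \<in> {a..b}" for t j
    proof -
      have "\<bar>P t j - P t (j-1)\<bar> \<le> G (j+1) + 2 * G j + G (j-1)"
        by (rule Pbd) (use G(2) t in blast)
      then have "\<bar>P t j - P t (j-1)\<bar> / h \<le> M j" unfolding M_def
        by (rule divide_right_mono) (use hpos in simp)
      then show ?thesis unfolding f'_eq using hpos by (simp add: abs_divide)
    qed
    then show ?thesis using Ms by blast
  qed
  have zero: "(\<Sum>\<^sub>\<infinity>j. f' j t) = 0" for t
  proof -
    obtain G where G: "G summable_on UNIV" "\<forall>j. \<forall>m\<in>{-1, 0, 1 :: int}.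
      \<bar>alpha t (xj (j+m))\<bar> * \<bar>v t j\<bar> \<le> G j"
      using Gb[of t t] by auto
    have s1: "(\<lambda>j. alpha t (xj (j + -1)) * v t j) summable_on UNIV"
      by (rule sm_cmp[OF G(1)]) (use G(2) in \<open>auto simp: abs_mult\<close>)
    have s1': "(\<lambda>j. alpha t (xj j) * v t (j+1)) summable_on UNIV"
      using sm_shift[OF s1, of 1] by simp
    have s2: "(\<lambda>j. alpha t (xj (j+1)) * v t j) summable_on UNIV"
      by (rule sm_cmp[OF G(1)]) (use G(2) in \<open>auto simp: abs_mult\<close>)
    have sP: "P t summable_on UNIV" unfolding P_def by (rule sm_diff[OF s1' s2])
    have sP': "(\<lambda>j. P t (j-1)) summable_on UNIV" using sm_shift[OF sP, of "-1"] by simp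
    have sh: "(\<Sum>\<^sub>\<infinity>j. P t (j-1)) = (\<Sum>\<^sub>\<infinity>j. P t j)" using is_shift[of "P t" "-1"] by simp
    have "(\<Sum>\<^sub>\<infinity>j. f' j t) = ((\<Sum>\<^sub>\<infinity>j. P t j) - (\<Sum>\<^sub>\<infinity>j. P t (j-1))) / h"
      unfolding f'_eq by (simp only: is_div is_diff[OF sP sP'])
    then show ?thesis using sh by simp
  qed
  have "((\<lambda>s. \<Sum>\<^sub>\<infinity>j. f j s) has_real_derivative 0) (at x)" for x
    using infsum_deriv[OF d sf bd, of x] zero[of x] by simp
  then have "(\<Sum>\<^sub>\<infinity>j. f j t) = (\<Sum>\<^sub>\<infinity>j. f j s)" by (intro DERIV_isconst_all) auto
  then show ?thesis unfolding f_def xj_def .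
qed


theorem mainTheorem5:
  fixes h C x0 :: real and v w :: "real \<Rightarrow> int \<Rightarrow> real"
  assumes hpos: "h > 0"
    and sol: "is_sd_wave_solution h C v w"
    and decay: "sd_decay v w"
  shows
    "(\<forall>k::nat. \<forall>t.
        (\<Sum>\<^sub>\<infinity>j. w t j * D0DDk h k (v t) j * h) = - (\<Sum>\<^sub>\<infinity>j. v t j * D0DDk h k (w t) j * h)) \<and>
     (\<forall>k::nat. \<forall>t s.
        (\<Sum>\<^sub>\<infinity>j. w t j * D0DDk h k (v t) j * h) = (\<Sum>\<^sub>\<infinity>j. w s j * D0DDk h k (v s) j * h)) \<and>
     (\<forall>(alpha :: real \<Rightarrow> real \<Rightarrow> real) (alpha_t :: real \<Rightarrow> real \<Rightarrow> real).
        (\<forall>t x. ((\<lambda>s. alpha s x) has_real_derivative alpha_t t x) (at t)) \<longrightarrow>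
        (\<forall>t x. ((\<lambda>s. alpha_t s x) has_real_derivative
                 ((alpha t (x + h) - 2 * alpha t x + alpha t (x - h)) / h\<^sup>2 - C * alpha t x)) (at t)) \<longrightarrow>
        (\<forall>a b. \<exists>G. G summable_on (UNIV :: int set) \<and>
           (\<forall>t\<in>{a..b}. \<forall>j. \<forall>m\<in>{-1, 0, 1 :: int}.
              (\<bar>alpha t (x0 + real_of_int (j + m) * h)\<bar> + \<bar>alpha_t t (x0 + real_of_int (j + m) * h)\<bar>)
                * (\<bar>v t j\<bar> + \<bar>w t j\<bar>) \<le> G j)) \<longrightarrow>
        (\<forall>t s.
           (\<Sum>\<^sub>\<infinity>j. (alpha t (x0 + real_of_int j * h) * w t j - alpha_t t (x0 + real_of_int j * h) * v t j) * h)
         = (\<Sum>\<^sub>\<infinity>j. (alpha s (x0 + real_of_int j * h) * w s j - alpha_t s (x0 + real_of_int j * h) * v s j) * h)))"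
proof (intro conjI allI impI)
  fix k t
  show "(\<Sum>\<^sub>\<infinity>j. w t j * D0DDk h k (v t) j * h) = - (\<Sum>\<^sub>\<infinity>j. v t j * D0DDk h k (w t) j * h)"
    by (rule part1[OF decay])
next
  fix k t s
  show "(\<Sum>\<^sub>\<infinity>j. w t j * D0DDk h k (v t) j * h) = (\<Sum>\<^sub>\<infinity>j. w s j * D0DDk h k (v s) j * h)"
    by (rule part2[OF hpos sol decay])
next
  fix alpha alpha_t :: "real \<Rightarrow> real \<Rightarrow> real" and t s
  assume a1: "\<forall>t x. ((\<lambda>s. alpha s x) has_real_derivative alpha_t t x) (at t)"
    and a2: "\<forall>t x. ((\<lambda>s. alpha_t s x) has_real_derivative
                 ((alpha t (x + h) - 2 * alpha t x + alpha t (x - h)) / h\<^sup>2 - C * alpha t x)) (at t)"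
    and a3: "\<forall>a b. \<exists>G. G summable_on (UNIV :: int set) \<and>
           (\<forall>t\<in>{a..b}. \<forall>j. \<forall>m\<in>{-1, 0, 1 :: int}.
              (\<bar>alpha t (x0 + real_of_int (j + m) * h)\<bar> + \<bar>alpha_t t (x0 + real_of_int (j + m) * h)\<bar>)
                * (\<bar>v t j\<bar> + \<bar>w t j\<bar>) \<le> G j)"
  show "(\<Sum>\<^sub>\<infinity>j. (alpha t (x0 + real_of_int j * h) * w t j - alpha_t t (x0 + real_of_int j * h) * v t j) * h)
         = (\<Sum>\<^sub>\<infinity>j. (alpha s (x0 + real_of_int j * h) * w s j - alpha_t s (x0 + real_of_int j * h) * v s j) * h)"
    by (rule part3[OF hpos sol a1 a2 a3])
qed

end
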